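(* Let $\lambda_v\ge0$, $r_v>0$ and $\rho_v=\lambda_v/r_v$ for $v\in V$. There exists a rate allocation scheme $\gamma$ for which the Markov process $N(t)$ is positive recurrent if and only if $\sum_{v'\in\bar{\mathcal A}(v)}\rho_{v'}<1$ for all $v\in V$.
   Context: $G=(V,E)$ is a finite directed rooted tree with vertex set $V=\{1,\dots,|V|\}$ and root $1$, edges oriented from parent to child. For $v\in V$: $\mathcal A(v)$ is the set of strict ancestors of $v$, $\bar{\mathcal A}(v)=\mathcal A(v)\cup\{v\}$. $\mathcal Z=\{z\in\{0,1\}^{V}: z_v z_{v'}=0 \text{ for all } v\in V,\ v'\in\mathcal A(v)\}$ and $\mathrm{conv}(\mathcal Z)$ is its convex hull. A rate allocation scheme is a map $\gamma:\mathbb N^{V}\to\mathrm{conv}(\mathcal Z)$. Given it, $N(t)\in\mathbb N^{V}$ is the continuous-time Markov chain (elastic traffic: flows arrive to beam $v$ as a Poisson process of rate $\lambda_v$, have exponential sizes of mean $1$, and beam $v$ serves at rate $r_v$ when active) with transition rates $n\to n+e^v$ at rate $\lambda_v$ and $n\to n-e^v$ at rate $r_v\gamma_v(n)\mathbf 1\{n_v\ge1\}$, where $e^v$ is the $v$-th canonical basis vector. *)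

theory Defs
  imports "HOL-Analysis.Analysis"
begin

(* Vertex set V = {1..nV}; edges E (parent, child); root 1. *)
definition rooted_tree :: "nat \<Rightarrow> (nat \<times> nat) set \<Rightarrow> bool" where
  "rooted_tree nV E \<longleftrightarrow> nV \<ge> 1 \<and> E \<subseteq> {1..nV} \<times> {1..nV}
     \<and> (\<forall>u. (u, 1) \<notin> E)
     \<and> (\<forall>v\<in>{1..nV}. v \<noteq> 1 \<longrightarrow> (\<exists>!u. (u, v) \<in> E))
     \<and> (\<forall>v\<in>{1..nV}. (1, v) \<in> E\<^sup>*)"

definition anc :: "(nat \<times> nat) set \<Rightarrow> nat \<Rightarrow> nat set" where
  "anc E v = {u. (u, v) \<in> E\<^sup>+}"

definition anc_bar :: "(nat \<times> nat) set \<Rightarrow> nat \<Rightarrow> nat set" where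
  "anc_bar E v = anc E v \<union> {v}"

definition Zset :: "nat \<Rightarrow> (nat \<times> nat) set \<Rightarrow> (nat \<Rightarrow> real) set" where
  "Zset nV E = {z. (\<forall>v. z v \<in> {0, 1}) \<and> (\<forall>v. v \<notin> {1..nV} \<longrightarrow> z v = 0)
      \<and> (\<forall>v\<in>{1..nV}. \<forall>v'\<in>anc E v. z v * z v' = 0)}"

definition convZ :: "nat \<Rightarrow> (nat \<times> nat) set \<Rightarrow> (nat \<Rightarrow> real) set" where
  "convZ nV E = {g. \<exists>c :: (nat \<Rightarrow> real) \<Rightarrow> real.
      (\<forall>z\<in>Zset nV E. c z \<ge> 0) \<and> (\<Sum>z\<in>Zset nV E. c z) = 1
      \<and> (\<forall>v\<in>{1..nV}. g v = (\<Sum>z\<in>Zset nV E. c z * z v))}"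

definition states :: "nat \<Rightarrow> (nat \<Rightarrow> nat) set" where
  "states nV = {n. \<forall>v. v \<notin> {1..nV} \<longrightarrow> n v = 0}"

definition rate_alloc :: "nat \<Rightarrow> (nat \<times> nat) set \<Rightarrow> ((nat \<Rightarrow> nat) \<Rightarrow> nat \<Rightarrow> real) \<Rightarrow> bool" where
  "rate_alloc nV E \<gamma> \<longleftrightarrow> (\<forall>n\<in>states nV. \<gamma> n \<in> convZ nV E)"

definition up :: "(nat \<Rightarrow> nat) \<Rightarrow> nat \<Rightarrow> (nat \<Rightarrow> nat)" where
  "up n v = n(v := n v + 1)"

definition down :: "(nat \<Rightarrow> nat) \<Rightarrow> nat \<Rightarrow> (nat \<Rightarrow> nat)" where
  "down n v = n(v := n v - 1)"

definition srate :: "(nat \<Rightarrow> real) \<Rightarrow> ((nat \<Rightarrow> nat) \<Rightarrow> nat \<Rightarrow> real) \<Rightarrow> (nat \<Rightarrow> nat) \<Rightarrow> nat \<Rightarrow> real" where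
  "srate r \<gamma> n v = (if n v \<ge> 1 then r v * \<gamma> n v else 0)"

definition qtot :: "nat \<Rightarrow> (nat \<Rightarrow> real) \<Rightarrow> (nat \<Rightarrow> real) \<Rightarrow> ((nat \<Rightarrow> nat) \<Rightarrow> nat \<Rightarrow> real) \<Rightarrow> (nat \<Rightarrow> nat) \<Rightarrow> real" where
  "qtot nV lam r \<gamma> n = (\<Sum>v\<in>{1..nV}. lam v + srate r \<gamma> n v)"

(* Expectation over one step of the jump chain from n, with the target state i
   "tabooed" (f is replaced by 0 at i):  sum_y p(n,y) 1{y \<noteq> i} f(y). *)
definition jstep :: "nat \<Rightarrow> (nat \<Rightarrow> real) \<Rightarrow> (nat \<Rightarrow> real) \<Rightarrow> ((nat \<Rightarrow> nat) \<Rightarrow> nat \<Rightarrow> real)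
     \<Rightarrow> (nat \<Rightarrow> nat) \<Rightarrow> ((nat \<Rightarrow> nat) \<Rightarrow> real) \<Rightarrow> (nat \<Rightarrow> nat) \<Rightarrow> real" where
  "jstep nV lam r \<gamma> i f n = (\<Sum>v\<in>{1..nV}.
      lam v / qtot nV lam r \<gamma> n * (if up n v = i then 0 else f (up n v))
    + srate r \<gamma> n v / qtot nV lam r \<gamma> n * (if down n v = i then 0 else f (down n v)))"

(* probability that the jump chain started at n first hits i at jump k+1 *)
fun first_hit :: "nat \<Rightarrow> (nat \<Rightarrow> real) \<Rightarrow> (nat \<Rightarrow> real) \<Rightarrow> ((nat \<Rightarrow> nat) \<Rightarrow> nat \<Rightarrow> real)
     \<Rightarrow> (nat \<Rightarrow> nat) \<Rightarrow> nat \<Rightarrow> (nat \<Rightarrow> nat) \<Rightarrow> real" where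
  "first_hit nV lam r \<gamma> i 0 n = (\<Sum>v\<in>{1..nV}.
      lam v / qtot nV lam r \<gamma> n * (if up n v = i then 1 else 0)
    + srate r \<gamma> n v / qtot nV lam r \<gamma> n * (if down n v = i then 1 else 0))"
| "first_hit nV lam r \<gamma> i (Suc k) n = jstep nV lam r \<gamma> i (first_hit nV lam r \<gamma> i k) n"

(* E_n[ 1{Y_1,...,Y_k \<noteq> i} / q(Y_k) ]  for the jump chain Y started at n;
   summing over k gives the expected time until the return to i. *)
fun hold_term :: "nat \<Rightarrow> (nat \<Rightarrow> real) \<Rightarrow> (nat \<Rightarrow> real) \<Rightarrow> ((nat \<Rightarrow> nat) \<Rightarrow> nat \<Rightarrow> real)
     \<Rightarrow> (nat \<Rightarrow> nat) \<Rightarrow> nat \<Rightarrow> (nat \<Rightarrow> nat) \<Rightarrow> real" where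
  "hold_term nV lam r \<gamma> i 0 n = 1 / qtot nV lam r \<gamma> n"
| "hold_term nV lam r \<gamma> i (Suc k) n = jstep nV lam r \<gamma> i (hold_term nV lam r \<gamma> i k) n"

definition recurrent_state where
  "recurrent_state nV lam r \<gamma> i \<longleftrightarrow> qtot nV lam r \<gamma> i = 0
     \<or> (\<lambda>k. first_hit nV lam r \<gamma> i k i) sums 1"

(* Norris: a recurrent state is positive recurrent if q_i = 0 or m_i = E_i[T_i] < \<infinity> *)
definition pos_recurrent_state where
  "pos_recurrent_state nV lam r \<gamma> i \<longleftrightarrow> recurrent_state nV lam r \<gamma> i
     \<and> (qtot nV lam r \<gamma> i = 0 \<or> summable (\<lambda>k. hold_term nV lam r \<gamma> i k i))"

(* N(t), started empty, is positive recurrent: the empty state is positive recurrent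
   (equivalently, the communicating class of the chain started at 0 is positive recurrent) *)
definition pos_recurrent_chain where
  "pos_recurrent_chain nV lam r \<gamma> \<longleftrightarrow> pos_recurrent_state nV lam r \<gamma> (\<lambda>_. 0)"

end

theory Submission imports Defs begin

lemma aux_ineq: "(a::real) > 0 \<Longrightarrow> 1 / a * x \<le> y \<Longrightarrow> x \<le> a * y"
  by (simp add: field_simps)

locale qsys =
  fixes nV :: nat and lam r :: "nat \<Rightarrow> real" and g :: "(nat\<Rightarrow>nat) \<Rightarrow> nat \<Rightarrow> real"
  assumes lam_nn: "\<forall>v\<in>{1..nV}. lam v \<ge> 0" and r_pos: "\<forall>v\<in>{1..nV}. r v > 0"
    and g_nn: "\<forall>n\<in>states nV. \<forall>v\<in>{1..nV}. g n v \<ge> 0"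
    and g_le1: "\<forall>n\<in>states nV. \<forall>v\<in>{1..nV}. g n v \<le> 1"
    and Lpos: "(\<Sum>v\<in>{1..nV}. lam v) > 0"
begin

abbreviation "q \<equiv> qtot nV lam r g"
abbreviation "J \<equiv> jstep nV lam r g (\<lambda>_. 0)"
abbreviation "sr \<equiv> srate r g"
definition "LL = (\<Sum>v\<in>{1..nV}. lam v)"
definition "QQ = LL + (\<Sum>v\<in>{1..nV}. r v)"

lemma up_st: "n \<in> states nV \<Longrightarrow> v \<in> {1..nV} \<Longrightarrow> up n v \<in> states nV"
  by (auto simp: states_def up_def)
lemma down_st: "n \<in> states nV \<Longrightarrow> v \<in> {1..nV} \<Longrightarrow> down n v \<in> states nV"
  by (auto simp: states_def down_def)

lemma sr_nn: "n \<in> states nV \<Longrightarrow> v \<in> {1..nV} \<Longrightarrow> sr n v \<ge> 0"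
  using g_nn r_pos by (auto simp: srate_def less_imp_le)
lemma sr_le: "n \<in> states nV \<Longrightarrow> v \<in> {1..nV} \<Longrightarrow> sr n v \<le> r v"
  using g_le1 g_nn r_pos by (auto simp: srate_def mult_le_cancel_left1 less_imp_le)

lemma q_ge: "n \<in> states nV \<Longrightarrow> q n \<ge> LL"
  unfolding qtot_def LL_def by (rule sum_mono) (use sr_nn in auto)
lemma q_pos: "n \<in> states nV \<Longrightarrow> q n > 0"
  using q_ge Lpos LL_def by fastforce
lemma q_le: "n \<in> states nV \<Longrightarrow> q n \<le> QQ"
  unfolding qtot_def QQ_def LL_def sum.distrib[symmetric] by (rule sum_mono) (use sr_le in auto)
lemma LL_pos: "LL > 0" using Lpos LL_def by simp
lemma QQ_pos: "QQ > 0" using q_le q_pos[of "\<lambda>_. 0"] by (fastforce simp: states_def)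

definition "tu n v = (if up n v = (\<lambda>_. 0) then 0 else 1::real)"
definition "td n v = (if down n v = (\<lambda>_. 0) then 0 else 1::real)"

lemma J_eq: "J f n = (\<Sum>v\<in>{1..nV}. lam v / q n * tu n v * f (up n v) + sr n v / q n * td n v * f (down n v))"
  unfolding jstep_def tu_def td_def by (rule sum.cong) auto

lemma J_add: "J (\<lambda>y. f y + h y) n = J f n + J h n"
  unfolding J_eq sum.distrib[symmetric] by (rule sum.cong) (simp_all add: add_divide_distrib algebra_simps)
lemma J_scale: "J (\<lambda>y. c * f y) n = c * J f n"
  unfolding J_eq by (simp add: sum_distrib_left algebra_simps)
lemma J_sum: "J (\<lambda>y. \<Sum>j\<in>A. f j y) n = (\<Sum>j\<in>A. J (f j) n)"
  unfolding J_eq by (simp add: sum.swap[of _ A] sum_distrib_left sum.distrib)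

lemma tu_01: "0 \<le> tu n v" "tu n v \<le> 1" by (auto simp: tu_def)
lemma td_01: "0 \<le> td n v" "td n v \<le> 1" by (auto simp: td_def)

lemma q_eq: "q n = (\<Sum>v\<in>{1..nV}. lam v + sr n v)" by (simp add: qtot_def)

lemma coef_sum: "n \<in> states nV \<Longrightarrow> (\<Sum>v\<in>{1..nV}. lam v / q n + sr n v / q n) = 1"
proof -
  assume n: "n \<in> states nV"
  have "(\<Sum>v\<in>{1..nV}. lam v / q n + sr n v / q n) = (\<Sum>v\<in>{1..nV}. lam v + sr n v) / q n"
    by (simp add: add_divide_distrib sum_divide_distrib)
  also have "\<dots> = 1" using q_pos[OF n] by (simp add: qtot_def)
  finally show ?thesis .
qed

lemma J_mono_local:
  assumes n: "n \<in> states nV" and le: "\<And>u. u \<in> {1..nV} \<Longrightarrow> f (up n u) \<le> h (up n u) \<and> f (down n u) \<le> h (down n u)"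
  shows "J f n \<le> J h n"
  unfolding J_eq
proof (rule sum_mono)
  fix u assume u: "u \<in> {1..nV}"
  have a: "lam u / q n * tu n u \<ge> 0" using lam_nn u q_pos[OF n] tu_01 by auto
  have b: "sr n u / q n * td n u \<ge> 0" using sr_nn[OF n u] q_pos[OF n] td_01 by auto
  show "lam u / q n * tu n u * f (up n u) + sr n u / q n * td n u * f (down n u)
      \<le> lam u / q n * tu n u * h (up n u) + sr n u / q n * td n u * h (down n u)"
    using le[OF u] a b by (intro add_mono mult_left_mono) auto
qed

lemma J_mono: "n \<in> states nV \<Longrightarrow> (\<And>y. y \<in> states nV \<Longrightarrow> f y \<le> h y) \<Longrightarrow> J f n \<le> J h n"
proof -
  assume n: "n \<in> states nV" and le: "\<And>y. y \<in> states nV \<Longrightarrow> f y \<le> h y"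
  show ?thesis
  proof (rule J_mono_local[OF n])
    fix u assume u: "u \<in> {1..nV}"
    show "f (up n u) \<le> h (up n u) \<and> f (down n u) \<le> h (down n u)"
      using le[OF up_st[OF n u]] le[OF down_st[OF n u]] by simp
  qed
qed

lemma J_one: "n \<in> states nV \<Longrightarrow> J (\<lambda>_. 1) n \<le> 1"
proof -
  assume n: "n \<in> states nV"
  have "J (\<lambda>_. 1) n = (\<Sum>v\<in>{1..nV}. lam v / q n * tu n v + sr n v / q n * td n v)" by (simp add: J_eq)
  also have "\<dots> \<le> (\<Sum>v\<in>{1..nV}. lam v / q n + sr n v / q n)"
  proof (rule sum_mono)
    fix u assume u: "u \<in> {1..nV}"
    have a: "lam u / q n \<ge> 0" using lam_nn u q_pos[OF n] by auto
    have b: "sr n u / q n \<ge> 0" using sr_nn[OF n u] q_pos[OF n] by auto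
    show "lam u / q n * tu n u + sr n u / q n * td n u \<le> lam u / q n + sr n u / q n"
      using a b tu_01 td_01 by (intro add_mono mult_left_le) auto
  qed
  also have "\<dots> = 1" using coef_sum[OF n] .
  finally show ?thesis .
qed

lemma J_zero: "J (\<lambda>_. 0) n = 0" using J_scale[of 0 "\<lambda>_. 0" n] by simp

lemma J_const: "J (\<lambda>_. c) n = c * J (\<lambda>_. 1) n" using J_scale[of c "\<lambda>_. 1" n] by simp

lemma J_nn: "n \<in> states nV \<Longrightarrow> (\<And>y. y \<in> states nV \<Longrightarrow> f y \<ge> 0) \<Longrightarrow> J f n \<ge> 0"
  using J_mono[of n "\<lambda>_. 0" f] J_zero by simp

lemma J_nf: "f (\<lambda>_. 0) = 0 \<Longrightarrow> J f n = (\<Sum>v\<in>{1..nV}. lam v * f (up n v) + sr n v * f (down n v)) / q n"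
  unfolding J_eq sum_divide_distrib by (rule sum.cong) (auto simp: tu_def td_def add_divide_distrib)

lemma Jk_add: "(J ^^ k) (\<lambda>y. f y + h y) = (\<lambda>y. (J ^^ k) f y + (J ^^ k) h y)"
  by (induction k) (auto simp: J_add)
lemma Jk_scale: "(J ^^ k) (\<lambda>y. c * f y) = (\<lambda>y. c * (J ^^ k) f y)"
  by (induction k) (auto simp: J_scale)
lemma Jk_sum: "(J ^^ k) (\<lambda>y. \<Sum>j\<in>A. f j y) = (\<lambda>y. \<Sum>j\<in>A. (J ^^ k) (f j) y)"
  by (induction k) (auto simp: J_sum)
lemma Jk_diff: "(J ^^ k) (\<lambda>y. f y - h y) = (\<lambda>y. (J ^^ k) f y - (J ^^ k) h y)"
proof -
  have "(J ^^ k) (\<lambda>y. f y + (-1) * h y) = (\<lambda>y. (J ^^ k) f y + (J ^^ k) (\<lambda>y. (-1) * h y) y)"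
    by (rule Jk_add)
  then show ?thesis by (simp add: Jk_scale[of k "-1" h, simplified])
qed
lemma Jk_mono: "(\<And>y. y \<in> states nV \<Longrightarrow> f y \<le> h y) \<Longrightarrow> n \<in> states nV \<Longrightarrow> (J ^^ k) f n \<le> (J ^^ k) h n"
proof (induction k arbitrary: n)
  case 0 then show ?case by simp
next
  case (Suc k) then show ?case by (simp add: J_mono)
qed
lemma Jk_zero: "(J ^^ k) (\<lambda>_. 0) = (\<lambda>_. 0)"
  by (induction k) (auto simp: J_zero)
lemma Jk_nn: "(\<And>y. y \<in> states nV \<Longrightarrow> f y \<ge> 0) \<Longrightarrow> n \<in> states nV \<Longrightarrow> (J ^^ k) f n \<ge> 0"
  using Jk_mono[of "\<lambda>_. 0" f n k] Jk_zero by simp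
lemma Jk_one: "n \<in> states nV \<Longrightarrow> (J ^^ k) (\<lambda>_. 1) n \<le> 1"
proof (induction k arbitrary: n)
  case 0 then show ?case by simp
next
  case (Suc k)
  have "(J ^^ Suc k) (\<lambda>_. 1) n = J ((J ^^ k) (\<lambda>_. 1)) n" by simp
  also have "\<dots> \<le> J (\<lambda>_. 1) n" using Suc by (intro J_mono) auto
  also have "\<dots> \<le> 1" using J_one Suc by auto
  finally show ?case .
qed
lemma Jk_const: "(J ^^ k) (\<lambda>_. c) n = c * (J ^^ k) (\<lambda>_. 1) n"
  using Jk_scale[of k c "\<lambda>_. 1"] by (simp add: fun_eq_iff)
lemma Jk_Suc_right: "(J ^^ Suc k) f = (J ^^ k) (J f)"
  by (simp add: funpow_Suc_right del: funpow.simps)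

lemma hold_eq: "hold_term nV lam r g (\<lambda>_. 0) k = (J ^^ k) (\<lambda>n. 1 / q n)"
proof (induction k)
  case (Suc k) show ?case by (rule ext) (simp only: hold_term.simps Suc.IH funpow.simps comp_def)
qed (rule ext, simp)
lemma fh_eq: "first_hit nV lam r g (\<lambda>_. 0) k = (J ^^ k) (first_hit nV lam r g (\<lambda>_. 0) 0)"
proof (induction k)
  case (Suc k) show ?case by (rule ext) (simp only: first_hit.simps(2) Suc.IH funpow.simps comp_def)
qed simp

lemma Jk_cong: "(\<And>y. y \<in> states nV \<Longrightarrow> f y = h y) \<Longrightarrow> n \<in> states nV \<Longrightarrow> (J ^^ k) f n = (J ^^ k) h n"
  using Jk_mono[of f h n k] Jk_mono[of h f n k] by force

lemma fh0: "n \<in> states nV \<Longrightarrow> first_hit nV lam r g (\<lambda>_. 0) 0 n = 1 - J (\<lambda>_. 1) n"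
proof -
  assume n: "n \<in> states nV"
  have "first_hit nV lam r g (\<lambda>_. 0) 0 n + J (\<lambda>_. 1) n = (\<Sum>v\<in>{1..nV}. lam v / q n + sr n v / q n)"
    unfolding first_hit.simps jstep_def sum.distrib[symmetric]
    by (rule sum.cong) (auto simp: add_divide_distrib[symmetric])
  then show ?thesis using coef_sum[OF n] by simp
qed

lemma compare:
  assumes V0: "\<And>y. y \<in> states nV \<Longrightarrow> Vf y \<ge> 0" and h0: "\<And>y. y \<in> states nV \<Longrightarrow> h y \<ge> 0"
    and sup: "\<And>y. y \<in> states nV \<Longrightarrow> Vf y \<ge> h y + J Vf y"
  shows "n \<in> states nV \<Longrightarrow> (\<Sum>k<K. (J ^^ k) h n) \<le> Vf n"
proof -
  have *: "\<forall>n\<in>states nV. (\<Sum>k<K. (J ^^ k) h n) + (J ^^ K) Vf n \<le> Vf n" for K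
  proof (induction K)
    case 0 then show ?case by simp
  next
    case (Suc K)
    show ?case
    proof
      fix n assume n: "n \<in> states nV"
      have "(J ^^ Suc K) Vf n = (J ^^ K) (J Vf) n" by (simp add: Jk_Suc_right del: funpow.simps)
      also have "\<dots> \<le> (J ^^ K) (\<lambda>y. Vf y - h y) n" using sup n by (intro Jk_mono) (auto simp: algebra_simps)
      also have "\<dots> = (J ^^ K) Vf n - (J ^^ K) h n" by (simp add: Jk_diff)
      finally have c: "(J ^^ Suc K) Vf n \<le> (J ^^ K) Vf n - (J ^^ K) h n" .
      have e: "(\<Sum>k<Suc K. (J ^^ k) h n) = (\<Sum>k<K. (J ^^ k) h n) + (J ^^ K) h n" by simp
      have i: "(\<Sum>k<K. (J ^^ k) h n) + (J ^^ K) Vf n \<le> Vf n" using Suc.IH n by blast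
      show "(\<Sum>k<Suc K. (J ^^ k) h n) + (J ^^ Suc K) Vf n \<le> Vf n"
        unfolding e using c i by linarith
    qed
  qed
  assume n: "n \<in> states nV"
  show ?thesis using *[of K] n Jk_nn[OF V0 n, where k=K] by force
qed

lemma zero_st: "(\<lambda>_. 0) \<in> states nV" by (simp add: states_def)

lemma suff_core:
  assumes V0: "\<And>y. y \<in> states nV \<Longrightarrow> Vf y \<ge> 0"
    and sup: "\<And>y. y \<in> states nV \<Longrightarrow> Vf y \<ge> 1 / q y + J Vf y"
  shows "pos_recurrent_chain nV lam r g"
proof -
  let ?z = "(\<lambda>_. 0) :: nat \<Rightarrow> nat"
  let ?h = "\<lambda>k. hold_term nV lam r g ?z k ?z"
  have hnn: "\<And>y. y \<in> states nV \<Longrightarrow> 1 / q y \<ge> 0" using q_pos by (simp add: less_imp_le)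
  have sh: "summable ?h"
  proof (rule summableI_nonneg_bounded)
    show "0 \<le> ?h k" for k unfolding hold_eq using Jk_nn[OF hnn zero_st] by simp
    show "sum ?h {..<K} \<le> Vf ?z" for K
      unfolding hold_eq using compare[OF V0 hnn sup zero_st] by simp
  qed
  have lim0: "(\<lambda>K. (J ^^ K) (\<lambda>_. 1) ?z) \<longlonglongrightarrow> 0"
  proof (rule tendsto_sandwich[of "\<lambda>_. 0" _ sequentially "\<lambda>K. QQ * ?h K"])
    show "\<forall>\<^sub>F K in sequentially. 0 \<le> (J ^^ K) (\<lambda>_. 1) ?z"
      using Jk_nn[OF _ zero_st, of "\<lambda>_. 1"] by simp
    show "\<forall>\<^sub>F K in sequentially. (J ^^ K) (\<lambda>_. 1) ?z \<le> QQ * ?h K"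
    proof (rule always_eventually, rule allI)
      fix K
      have "(J ^^ K) (\<lambda>_. 1) ?z \<le> (J ^^ K) (\<lambda>n. QQ * (1 / q n)) ?z"
        using q_le q_pos zero_st by (intro Jk_mono) (auto simp: field_simps)
      also have "\<dots> = QQ * ?h K" by (simp only: Jk_scale[of K QQ "\<lambda>n. 1 / q n"] hold_eq)
      finally show "(J ^^ K) (\<lambda>_. 1) ?z \<le> QQ * ?h K" .
    qed
    show "(\<lambda>K. QQ * ?h K) \<longlonglongrightarrow> 0"
      using tendsto_mult_right_zero[OF summable_LIMSEQ_zero[OF sh]] by simp
    show "(\<lambda>K. 0::real) \<longlonglongrightarrow> 0" by (rule tendsto_const)
  qed
  have fk: "first_hit nV lam r g ?z k ?z = (J ^^ k) (\<lambda>_. 1) ?z - (J ^^ Suc k) (\<lambda>_. 1) ?z" for k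
  proof -
    have "first_hit nV lam r g ?z k ?z = (J ^^ k) (\<lambda>y. 1 - J (\<lambda>_. 1) y) ?z"
      by (subst fh_eq) (rule Jk_cong[OF _ zero_st], rule fh0)
    also have "\<dots> = (J ^^ k) (\<lambda>_. 1) ?z - (J ^^ k) (J (\<lambda>_. 1)) ?z" by (simp add: Jk_diff)
    also have "\<dots> = (J ^^ k) (\<lambda>_. 1) ?z - (J ^^ Suc k) (\<lambda>_. 1) ?z"
      by (simp add: Jk_Suc_right del: funpow.simps)
    finally show ?thesis .
  qed
  have "(\<lambda>k. first_hit nV lam r g ?z k ?z) sums 1"
    unfolding sums_def
  proof -
    have "(\<Sum>k<K. first_hit nV lam r g ?z k ?z) = 1 - (J ^^ K) (\<lambda>_. 1) ?z" for K
      unfolding fk using sum_lessThan_telescope'[of "\<lambda>k. (J ^^ k) (\<lambda>_. 1) ?z" K] by simp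
    then show "(\<lambda>K. \<Sum>k<K. first_hit nV lam r g ?z k ?z) \<longlonglongrightarrow> 1"
      using tendsto_diff[OF tendsto_const[of 1] lim0] by simp
  qed
  then show ?thesis using sh
    unfolding pos_recurrent_chain_def pos_recurrent_state_def recurrent_state_def by simp
qed

lemma foster:
  assumes Phi0: "\<And>y. y \<in> states nV \<Longrightarrow> Phi y \<ge> 0"
    and dout: "\<And>y. y \<in> states nV \<Longrightarrow> y \<notin> F \<Longrightarrow> J Phi y \<le> Phi y - eps"
    and din: "\<And>y. y \<in> states nV \<Longrightarrow> J Phi y \<le> Phi y + b"
    and eps: "eps > 0" and b: "b \<ge> 0" and p: "p > 0"
    and hitF: "\<And>y. y \<in> states nV \<Longrightarrow> y \<in> F \<Longrightarrow> (J ^^ m) (\<lambda>_. 1) y \<le> 1 - p"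
  shows "pos_recurrent_chain nV lam r g"
proof -
  define psi where "psi = (\<lambda>y. \<Sum>j<m. (J ^^ j) (\<lambda>_. 1) y)"
  define K where "K = (b + eps) / p"
  have K0: "K \<ge> 0" using b eps p by (simp add: K_def)
  have Kp: "K * p = b + eps" using p by (simp add: K_def)
  have Jpsi: "J psi y = psi y - 1 + (J ^^ m) (\<lambda>_. 1) y" for y
  proof -
    have "J psi y = (\<Sum>j<m. (J ^^ Suc j) (\<lambda>_. 1) y)" unfolding psi_def J_sum by simp
    moreover have "(\<Sum>j<Suc m. (J ^^ j) (\<lambda>_. 1) y) = (\<Sum>j<m. (J ^^ j) (\<lambda>_. 1) y) + (J ^^ m) (\<lambda>_. 1) y"
      by simp
    moreover have "(\<Sum>j<Suc m. (J ^^ j) (\<lambda>_. 1) y) = 1 + (\<Sum>j<m. (J ^^ Suc j) (\<lambda>_. 1) y)"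
      by (subst sum.lessThan_Suc_shift) simp
    ultimately show ?thesis unfolding psi_def by linarith
  qed
  have psi0: "psi y \<ge> 0" if "y \<in> states nV" for y
    unfolding psi_def using Jk_nn[of "\<lambda>_. 1" y] that by (auto intro!: sum_nonneg)
  define U where "U = (\<lambda>y. Phi y + K * psi y)"
  have JU: "J U y = J Phi y + K * J psi y" for y unfolding U_def J_add J_scale ..
  have dU: "J U y \<le> U y - eps" if y: "y \<in> states nV" for y
  proof (cases "y \<in> F")
    case True
    have "J U y = J Phi y + K * (psi y - 1 + (J ^^ m) (\<lambda>_. 1) y)" using JU Jpsi by simp
    also have "\<dots> \<le> Phi y + b + K * (psi y - p)"
      using din[OF y] hitF[OF y True] K0 by (intro add_mono mult_left_mono) auto
    also have "\<dots> = U y - eps" using Kp by (simp add: U_def algebra_simps)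
    finally show ?thesis .
  next
    case False
    have "J U y = J Phi y + K * (psi y - 1 + (J ^^ m) (\<lambda>_. 1) y)" using JU Jpsi by simp
    also have "\<dots> \<le> Phi y - eps + K * psi y"
      using dout[OF y False] Jk_one[OF y, of m] K0 by (intro add_mono mult_left_mono) auto
    also have "\<dots> = U y - eps" by (simp add: U_def algebra_simps)
    finally show ?thesis .
  qed
  define Vf where "Vf = (\<lambda>y. U y / (eps * LL))"
  have eL: "eps * LL > 0" using eps LL_pos by simp
  show ?thesis
  proof (rule suff_core[of Vf])
    fix y assume y: "y \<in> states nV"
    show "Vf y \<ge> 0" unfolding Vf_def U_def using Phi0[OF y] psi0[OF y] K0 eL by simp
    have "J Vf y = J U y / (eps * LL)" unfolding Vf_def using J_scale[of "1 / (eps * LL)" U y] by simp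
    also have "\<dots> \<le> (U y - eps) / (eps * LL)" using dU[OF y] eL by (simp add: divide_right_mono)
    also have "\<dots> = Vf y - 1 / LL" unfolding Vf_def using eL eps LL_pos by (simp add: field_simps)
    also have "\<dots> \<le> Vf y - 1 / q y" using q_ge[OF y] LL_pos by (simp add: frac_le)
    finally show "Vf y \<ge> 1 / q y + J Vf y" by simp
  qed
qed

definition "Wf P n = (\<Sum>u\<in>P. real (n u) / r u)"

lemma Wf_up: "finite P \<Longrightarrow> Wf P (up n v) = Wf P n + (if v \<in> P then 1 / r v else 0)"
proof -
  assume f: "finite P"
  have "Wf P (up n v) = (\<Sum>u\<in>P. real (n u) / r u + (if u = v then 1 / r u else 0))"
    unfolding Wf_def up_def by (rule sum.cong) (auto simp: add_divide_distrib)
  also have "\<dots> = Wf P n + (if v \<in> P then 1 / r v else 0)"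
    using f by (simp add: sum.distrib Wf_def)
  finally show ?thesis .
qed

lemma Wf_down: "finite P \<Longrightarrow> n v \<ge> 1 \<Longrightarrow> Wf P (down n v) = Wf P n - (if v \<in> P then 1 / r v else 0)"
proof -
  assume f: "finite P" and nv: "n v \<ge> 1"
  have "Wf P (down n v) = (\<Sum>u\<in>P. real (n u) / r u - (if u = v then 1 / r u else 0))"
    unfolding Wf_def down_def using nv by (intro sum.cong) (auto simp: of_nat_diff diff_divide_distrib)
  also have "\<dots> = Wf P n - (if v \<in> P then 1 / r v else 0)"
    using f by (simp add: sum_subtractf Wf_def)
  finally show ?thesis .
qed

lemma Wf_down_le: "P \<subseteq> {1..nV} \<Longrightarrow> Wf P (down n v) \<le> Wf P n"
  unfolding Wf_def down_def using r_pos
  by (intro sum_mono divide_right_mono) (auto simp: subset_iff less_imp_le)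

lemma Wf_zero: "Wf P (\<lambda>_. 0) = 0" by (simp add: Wf_def)

lemma Wf_nn: "P \<subseteq> {1..nV} \<Longrightarrow> Wf P n \<ge> 0"
  unfolding Wf_def using r_pos by (intro sum_nonneg) (auto simp: subset_iff less_imp_le)

lemma sr_W: "finite P \<Longrightarrow> sr n v * Wf P (down n v) = sr n v * Wf P n - (if v \<in> P then sr n v / r v else 0)"
  by (cases "n v \<ge> 1") (auto simp: Wf_down srate_def algebra_simps)

lemma sum_ind: "finite A \<Longrightarrow> P \<subseteq> A \<Longrightarrow> (\<Sum>v\<in>A. if v \<in> P then f v else 0) = (\<Sum>v\<in>P. f v)"
  by (simp add: sum.inter_restrict[symmetric] Int_absorb1)

lemma JW: assumes P: "P \<subseteq> {1..nV}" and n: "n \<in> states nV"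
  shows "q n * J (Wf P) n = q n * Wf P n + (\<Sum>v\<in>P. lam v / r v) - (\<Sum>v\<in>P. sr n v / r v)"
proof -
  have f: "finite P" using P finite_subset by blast
  have "q n * J (Wf P) n = (\<Sum>v\<in>{1..nV}. lam v * Wf P (up n v) + sr n v * Wf P (down n v))"
    using q_pos[OF n] by (simp add: J_nf Wf_zero)
  also have "\<dots> = (\<Sum>v\<in>{1..nV}. (lam v + sr n v) * Wf P n + ((if v \<in> P then lam v / r v else 0)
       - (if v \<in> P then sr n v / r v else 0)))"
    by (rule sum.cong) (auto simp: Wf_up[OF f] sr_W[OF f] algebra_simps)
  also have "\<dots> = (\<Sum>v\<in>{1..nV}. (lam v + sr n v)) * Wf P n + ((\<Sum>v\<in>{1..nV}. if v \<in> P then lam v / r v else 0)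
       - (\<Sum>v\<in>{1..nV}. if v \<in> P then sr n v / r v else 0))"
    by (simp add: sum.distrib sum_subtractf sum_distrib_right sum_distrib_left algebra_simps)
  also have "\<dots> = q n * Wf P n + (\<Sum>v\<in>P. lam v / r v) - (\<Sum>v\<in>P. sr n v / r v)"
    unfolding sum_ind[OF finite_atLeastAtMost P] q_eq by simp
  finally show ?thesis .
qed

lemma nec_core:
  assumes P: "P \<subseteq> {1..nV}" and sumg: "\<And>n. n \<in> states nV \<Longrightarrow> (\<Sum>u\<in>P. g n u) \<le> 1"
    and rho: "(\<Sum>u\<in>P. lam u / r u) \<ge> 1"
    and sh: "summable (\<lambda>k. hold_term nV lam r g (\<lambda>_. 0) k (\<lambda>_. 0))"
  shows False
proof -
  let ?z = "(\<lambda>_. 0) :: nat \<Rightarrow> nat"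
  let ?W = "Wf P"
  have f: "finite P" using P finite_subset by blast
  have srg: "sr n v / r v \<le> g n v" if "n \<in> states nV" "v \<in> P" for n v
    using that P r_pos g_nn by (auto simp: srate_def)
  have JWge: "J ?W n \<ge> ?W n" if n: "n \<in> states nV" for n
  proof -
    have "(\<Sum>v\<in>P. sr n v / r v) \<le> (\<Sum>v\<in>P. g n v)" using srg[OF n] by (intro sum_mono) auto
    then have "q n * J ?W n \<ge> q n * ?W n" using JW[OF P n] sumg[OF n] rho by linarith
    then show ?thesis using q_pos[OF n] by simp
  qed
  have JW0: "J ?W ?z \<ge> 1 / LL"
  proof -
    have q0: "q ?z = LL" by (simp add: qtot_def srate_def LL_def)
    have "(\<Sum>v\<in>P. sr ?z v / r v) = 0" by (simp add: srate_def)
    then have "LL * J ?W ?z \<ge> 1" using JW[OF P zero_st] rho q0 by (simp add: Wf_zero)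
    then show ?thesis using LL_pos by (simp add: field_simps)
  qed
  have Jkge: "(J ^^ k) ?W n \<ge> ?W n" if "n \<in> states nV" for k n
    using that
  proof (induction k arbitrary: n)
    case 0 then show ?case by simp
  next
    case (Suc k)
    have "(J ^^ Suc k) ?W n = (J ^^ k) (J ?W) n" by (simp add: Jk_Suc_right del: funpow.simps)
    also have "\<dots> \<ge> (J ^^ k) ?W n" using JWge Suc.prems by (intro Jk_mono) auto
    finally have "(J ^^ Suc k) ?W n \<ge> (J ^^ k) ?W n" .
    with Suc.IH[OF Suc.prems] show ?case by linarith
  qed
  define c where "c = (\<Sum>u\<in>P. 1 / r u)"
  have c_ge: "1 / r u \<le> c" if "u \<in> P" for u
    unfolding c_def using that f P r_pos by (intro member_le_sum) (auto simp: subset_iff less_imp_le)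
  have c0: "c \<ge> 0" unfolding c_def using P r_pos by (intro sum_nonneg) (auto simp: subset_iff less_imp_le)
  have upW: "?W (up n u) \<le> ?W n + c" if "u \<in> {1..nV}" for n u
    using c_ge[of u] c0 by (auto simp: Wf_up[OF f] c_def intro: sum_nonneg)
  have Jkle: "(J ^^ k) ?W n \<le> (?W n + c * k) * (J ^^ k) (\<lambda>_. 1) n" if "n \<in> states nV" for k n
    using that
  proof (induction k arbitrary: n)
    case 0 then show ?case by simp
  next
    case (Suc k)
    let ?A = "(J ^^ k) (\<lambda>_. 1)"
    have A0: "y \<in> states nV \<Longrightarrow> ?A y \<ge> 0" for y using Jk_nn[of "\<lambda>_. 1" y k] by simp
    have "(J ^^ Suc k) ?W n = J ((J ^^ k) ?W) n" by simp
    also have "\<dots> \<le> J (\<lambda>y. (?W y + c * k) * ?A y) n" using Suc by (intro J_mono) auto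
    also have "\<dots> \<le> J (\<lambda>y. (?W n + c * Suc k) * ?A y) n"
    proof (rule J_mono_local[OF Suc.prems])
      fix u assume u: "u \<in> {1..nV}"
      have a1: "?A (up n u) \<ge> 0" using A0 up_st[OF Suc.prems u] .
      have a2: "?A (down n u) \<ge> 0" using A0 down_st[OF Suc.prems u] .
      have w1: "?W (up n u) + c * k \<le> ?W n + c * Suc k" using upW[OF u, of n] by (simp add: algebra_simps)
      have c0: "c \<ge> 0" unfolding c_def using P r_pos by (intro sum_nonneg) (auto simp: subset_iff less_imp_le)
      have cs: "c * Suc k = c + c * k" by (simp add: algebra_simps)
      have w2: "?W (down n u) + c * k \<le> ?W n + c * Suc k" using Wf_down_le[OF P, of n u] c0 unfolding cs by linarith
      show "(?W (up n u) + c * k) * ?A (up n u) \<le> (?W n + c * Suc k) * ?A (up n u) \<and>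
            (?W (down n u) + c * k) * ?A (down n u) \<le> (?W n + c * Suc k) * ?A (down n u)"
        using mult_right_mono[OF w1 a1] mult_right_mono[OF w2 a2] by simp
    qed
    also have "\<dots> = (?W n + c * Suc k) * (J ^^ Suc k) (\<lambda>_. 1) n" by (simp add: J_scale)
    finally show ?case .
  qed
  have c_pos: "c > 0"
  proof -
    have "P \<noteq> {}" using rho by auto
    then obtain u where "u \<in> P" by auto
    then show ?thesis using c_ge[of u] P r_pos by (smt (verit) divide_pos_pos subsetD)
  qed
  have lb: "1 / (LL * c * QQ) * inverse (real (Suc k)) \<le> hold_term nV lam r g ?z (Suc k) ?z" for k
  proof -
    have "1 / LL \<le> (J ^^ Suc k) ?W ?z"
    proof -
      have "(J ^^ Suc k) ?W ?z = J ((J ^^ k) ?W) ?z" by simp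
      also have "\<dots> \<ge> J ?W ?z" using Jkge zero_st by (intro J_mono) auto
      finally show ?thesis using JW0 by simp
    qed
    also have "\<dots> \<le> c * Suc k * (J ^^ Suc k) (\<lambda>_. 1) ?z" using Jkle[OF zero_st, of "Suc k"] by (simp add: Wf_zero)
    also have "(J ^^ Suc k) (\<lambda>_. 1) ?z \<le> QQ * hold_term nV lam r g ?z (Suc k) ?z"
    proof -
      have "(J ^^ Suc k) (\<lambda>_. 1) ?z \<le> (J ^^ Suc k) (\<lambda>n. QQ * (1 / q n)) ?z"
        using q_le q_pos zero_st by (intro Jk_mono) (auto simp: field_simps)
      also have "\<dots> = QQ * hold_term nV lam r g ?z (Suc k) ?z"
        by (simp only: Jk_scale[of "Suc k" QQ "\<lambda>n. 1 / q n"] hold_eq)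
      finally show ?thesis .
    qed
    hence "c * Suc k * (J ^^ Suc k) (\<lambda>_. 1) ?z \<le> c * Suc k * (QQ * hold_term nV lam r g ?z (Suc k) ?z)"
      using c_pos by (intro mult_left_mono) auto
    finally have "1 / LL \<le> c * Suc k * (QQ * hold_term nV lam r g ?z (Suc k) ?z)" .
    then have "1 \<le> (LL * c * QQ * Suc k) * hold_term nV lam r g ?z (Suc k) ?z"
      using LL_pos by (simp add: divide_le_eq algebra_simps)
    moreover have D: "LL * c * QQ * Suc k > 0" using LL_pos QQ_pos c_pos by simp
    moreover have "1 / (LL * c * QQ) * inverse (real (Suc k)) = 1 / (LL * c * QQ * Suc k)"
      by (simp add: field_simps)
    ultimately show ?thesis by (simp add: pos_divide_le_eq algebra_simps)
  qed
  have "summable (\<lambda>k. hold_term nV lam r g ?z (Suc k) ?z)" using summable_Suc_iff[of "\<lambda>k. hold_term nV lam r g ?z k ?z"] sh by blast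
  then have "summable (\<lambda>k. (LL * c * QQ) * hold_term nV lam r g ?z (Suc k) ?z)" by (rule summable_mult)
  moreover have "norm (inverse (real (Suc k))) \<le> (LL * c * QQ) * hold_term nV lam r g ?z (Suc k) ?z" for k
  proof -
    have a: "LL * c * QQ > 0" using LL_pos QQ_pos c_pos by simp
    have "inverse (real (Suc k)) \<le> (LL * c * QQ) * hold_term nV lam r g ?z (Suc k) ?z"
      by (rule aux_ineq[OF a lb[of k]])
    moreover have "\<bar>inverse (real (Suc k))\<bar> = inverse (real (Suc k))" by simp
    ultimately show ?thesis by (simp only: real_norm_def)
  qed
  ultimately have "summable (\<lambda>k. inverse (real (Suc k)))" by (rule summable_comparison_test'[where N=0])
  then have "summable (\<lambda>k. inverse (real k))" using summable_Suc_iff[of "\<lambda>k. inverse (real k)"] by simp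
  then show False using not_summable_harmonic by blast
qed

lemma sr_W2: "finite P \<Longrightarrow> sr n v * (Wf P (down n v))^2 =
   sr n v * ((Wf P n)^2 - 2 * Wf P n * (if v \<in> P then 1 / r v else 0) + (if v \<in> P then 1 / (r v)^2 else 0))"
  by (cases "n v \<ge> 1") (auto simp: Wf_down srate_def power2_eq_square algebra_simps)

lemma sq_drift: assumes P: "P \<subseteq> {1..nV}" and n: "n \<in> states nV"
  shows "q n * J (\<lambda>y. (Wf P y)^2) n = q n * (Wf P n)^2
     + 2 * Wf P n * ((\<Sum>u\<in>P. lam u / r u) - (\<Sum>u\<in>P. sr n u / r u)) + (\<Sum>u\<in>P. (lam u + sr n u) / (r u)^2)"
proof -
  have f: "finite P" using P finite_subset by blast
  let ?W = "Wf P n"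
  have "q n * J (\<lambda>y. (Wf P y)^2) n = (\<Sum>v\<in>{1..nV}. lam v * (Wf P (up n v))^2 + sr n v * (Wf P (down n v))^2)"
    using q_pos[OF n] by (simp add: J_nf Wf_zero)
  also have "\<dots> = (\<Sum>v\<in>{1..nV}. (lam v + sr n v) * ?W^2
       + 2 * ?W * ((if v \<in> P then lam v / r v else 0) - (if v \<in> P then sr n v / r v else 0))
       + (if v \<in> P then (lam v + sr n v) / (r v)^2 else 0))"
    apply (rule sum.cong, simp)
    apply (simp only: Wf_up[OF f] sr_W2[OF f])
    apply (auto simp: power2_eq_square algebra_simps add_divide_distrib)
    done
  also have "\<dots> = (\<Sum>v\<in>{1..nV}. (lam v + sr n v)) * ?W^2
       + 2 * ?W * ((\<Sum>v\<in>{1..nV}. if v \<in> P then lam v / r v else 0) - (\<Sum>v\<in>{1..nV}. if v \<in> P then sr n v / r v else 0))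
       + (\<Sum>v\<in>{1..nV}. if v \<in> P then (lam v + sr n v) / (r v)^2 else 0)"
    by (simp add: sum.distrib sum_subtractf sum_distrib_right sum_distrib_left algebra_simps)
  also have "\<dots> = q n * ?W^2 + 2 * ?W * ((\<Sum>u\<in>P. lam u / r u) - (\<Sum>u\<in>P. sr n u / r u)) + (\<Sum>u\<in>P. (lam u + sr n u) / (r u)^2)"
    unfolding sum_ind[OF finite_atLeastAtMost P] q_eq by simp
  finally show ?thesis .
qed

definition "sz n = (\<Sum>v\<in>{1..nV}. n v)"

lemma sz_down: assumes u: "u \<in> {1..nV}" and nu: "n u \<ge> 1" shows "sz (down n u) + 1 = sz n"
proof -
  have "sz (down n u) = down n u u + (\<Sum>v\<in>{1..nV} - {u}. down n u v)"
    unfolding sz_def using u by (simp add: sum.remove)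
  also have "(\<Sum>v\<in>{1..nV} - {u}. down n u v) = (\<Sum>v\<in>{1..nV} - {u}. n v)"
    by (rule sum.cong) (auto simp: down_def)
  finally have "sz (down n u) = down n u u + (\<Sum>v\<in>{1..nV} - {u}. n v)" .
  moreover have "down n u u = n u - 1" by (simp add: down_def)
  ultimately have "sz (down n u) = n u - 1 + (\<Sum>v\<in>{1..nV} - {u}. n v)" by simp
  moreover have "sz n = n u + (\<Sum>v\<in>{1..nV} - {u}. n v)" unfolding sz_def using u by (simp add: sum.remove)
  ultimately show ?thesis using nu by simp
qed

lemma sz_zero: "n \<in> states nV \<Longrightarrow> sz n = 0 \<Longrightarrow> n = (\<lambda>_. 0)"
  by (auto simp: sz_def states_def fun_eq_iff)

lemma up0: "v \<in> {1..nV} \<Longrightarrow> up (\<lambda>_. 0) v \<noteq> (\<lambda>_. 0) \<and> sz (up (\<lambda>_. 0) v) = 1"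
proof -
  assume v: "v \<in> {1..nV}"
  have "sz (up (\<lambda>_. 0) v) = (\<Sum>w\<in>{1..nV}. if w = v then 1 else 0)"
    unfolding sz_def up_def by (rule sum.cong) auto
  also have "\<dots> = 1" using v by simp
  finally show ?thesis by (auto simp: up_def fun_eq_iff)
qed

lemma J_bound_one:
  assumes n: "n \<in> states nV" and u: "u \<in> {1..nV}" and f1: "\<And>y. y \<in> states nV \<Longrightarrow> f y \<le> 1"
    and f0: "\<And>y. y \<in> states nV \<Longrightarrow> f y \<ge> 0" and t: "td n u * f (down n u) \<le> 1 - t"
  shows "J f n \<le> 1 - sr n u / q n * t"
proof -
  have "J f n \<le> (\<Sum>v\<in>{1..nV}. lam v / q n + sr n v / q n * (if v = u then 1 - t else 1))"
    unfolding J_eq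
  proof (rule sum_mono)
    fix v assume v: "v \<in> {1..nV}"
    have a: "lam v / q n \<ge> 0" using lam_nn v q_pos[OF n] by auto
    have b: "sr n v / q n \<ge> 0" using sr_nn[OF n v] q_pos[OF n] by auto
    have x: "tu n v * f (up n v) \<le> 1" using tu_01[of n v] f1[OF up_st[OF n v]] f0[OF up_st[OF n v]]
      by (simp add: mult_le_one)
    have y: "td n v * f (down n v) \<le> (if v = u then 1 - t else 1)"
      using td_01[of n v] f1[OF down_st[OF n v]] f0[OF down_st[OF n v]] t by (simp add: mult_le_one)
    show "lam v / q n * tu n v * f (up n v) + sr n v / q n * td n v * f (down n v)
        \<le> lam v / q n + sr n v / q n * (if v = u then 1 - t else 1)"
      using mult_left_mono[OF x a] mult_left_mono[OF y b] by (simp add: mult.assoc)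
  qed
  also have "\<dots> = (\<Sum>v\<in>{1..nV}. (lam v / q n + sr n v / q n) - (if v = u then sr n v / q n * t else 0))"
    by (rule sum.cong) (auto simp: algebra_simps diff_divide_distrib)
  also have "\<dots> = (\<Sum>v\<in>{1..nV}. lam v / q n + sr n v / q n) - (\<Sum>v\<in>{1..nV}. if v = u then sr n v / q n * t else 0)"
    by (rule sum_subtractf)
  also have "\<dots> = 1 - sr n u / q n * t" using coef_sum[OF n] u by simp
  finally show ?thesis .
qed

lemma J_at0: assumes c: "c \<ge> 0" and le: "\<And>v. v \<in> {1..nV} \<Longrightarrow> f (up (\<lambda>_. 0) v) \<le> c"
  shows "J f (\<lambda>_. 0) \<le> c"
proof -
  let ?z = "(\<lambda>_. 0) :: nat \<Rightarrow> nat"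
  have sr0: "sr ?z v = 0" for v by (simp add: srate_def)
  have "J f ?z = (\<Sum>v\<in>{1..nV}. lam v / q ?z * tu ?z v * f (up ?z v))" unfolding J_eq sr0 by simp
  also have "\<dots> \<le> (\<Sum>v\<in>{1..nV}. lam v / q ?z * c)"
  proof (rule sum_mono)
    fix v assume v: "v \<in> {1..nV}"
    have a: "lam v / q ?z \<ge> 0" using lam_nn v q_pos[OF zero_st] by auto
    have "tu ?z v * f (up ?z v) \<le> c" using le[OF v] tu_01[of ?z v] c
      by (cases "tu ?z v = 0") (auto simp: tu_def split: if_splits)
    then show "lam v / q ?z * tu ?z v * f (up ?z v) \<le> lam v / q ?z * c"
      using mult_left_mono[OF _ a] by (simp add: mult.assoc)
  qed
  also have "\<dots> = c * (\<Sum>v\<in>{1..nV}. lam v / q ?z + sr ?z v / q ?z)"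
    by (simp add: sr0 sum_distrib_left algebra_simps)
  also have "\<dots> = c" using coef_sum[OF zero_st] by simp
  finally show ?thesis .
qed

lemma hit_claim:
  assumes serve1: "\<And>n. n \<in> states nV \<Longrightarrow> n \<noteq> (\<lambda>_. 0) \<Longrightarrow> \<exists>u\<in>{1..nV}. n u \<ge> 1 \<and> sr n u \<ge> mu"
    and mu: "mu > 0" and beta: "beta = mu / (QQ + mu)"
  shows "\<forall>y\<in>states nV. y \<noteq> (\<lambda>_. 0) \<longrightarrow> sz y \<le> k \<longrightarrow> (J ^^ k) (\<lambda>_. 1) y \<le> 1 - beta ^ k"
proof (induction k)
  case 0 then show ?case using sz_zero by auto
next
  case (Suc k)
  have b0: "beta \<ge> 0" "beta \<le> 1" using mu QQ_pos beta by auto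
  have bk: "beta ^ k \<le> 1" "beta ^ k \<ge> 0" using b0 by (auto simp: power_le_one)
  have bq: "beta \<le> mu / q n" if "n \<in> states nV" for n
  proof -
    have "beta \<le> mu / QQ" using beta mu QQ_pos by (simp add: frac_le)
    also have "\<dots> \<le> mu / q n" using q_le[OF that] q_pos[OF that] mu by (simp add: frac_le)
    finally show ?thesis .
  qed
  show ?case
  proof (intro ballI impI)
    fix n assume n: "n \<in> states nV" and nz: "n \<noteq> (\<lambda>_. 0)" and sn: "sz n \<le> Suc k"
    obtain u where u: "u \<in> {1..nV}" and nu: "n u \<ge> 1" and su: "sr n u \<ge> mu" using serve1[OF n nz] by blast
    let ?f = "(J ^^ k) (\<lambda>_. 1)"
    have f1: "\<And>y. y \<in> states nV \<Longrightarrow> ?f y \<le> 1" using Jk_one by blast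
    have f0: "\<And>y. y \<in> states nV \<Longrightarrow> ?f y \<ge> 0" using Jk_nn[of "\<lambda>_. 1"] by simp
    have t: "td n u * ?f (down n u) \<le> 1 - beta ^ k"
    proof (cases "down n u = (\<lambda>_. 0)")
      case True then show ?thesis using bk by (simp add: td_def)
    next
      case False
      have "sz (down n u) \<le> k" using sz_down[of u n, OF u nu] sn by simp
      then have "?f (down n u) \<le> 1 - beta ^ k" using Suc.IH down_st[OF n u] False by blast
      then show ?thesis using False by (simp add: td_def)
    qed
    have "(J ^^ Suc k) (\<lambda>_. 1) n = J ?f n" by simp
    also have "\<dots> \<le> 1 - sr n u / q n * beta ^ k" by (rule J_bound_one[where f="?f", OF n u f1 f0 t])
    also have "\<dots> \<le> 1 - beta * beta ^ k"
    proof -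
      have "beta \<le> sr n u / q n" using bq[OF n] su q_pos[OF n] by (smt (verit) divide_right_mono)
      then have "beta * beta ^ k \<le> sr n u / q n * beta ^ k" using bk by (intro mult_right_mono) auto
      then show ?thesis by linarith
    qed
    finally show "(J ^^ Suc k) (\<lambda>_. 1) n \<le> 1 - beta ^ Suc k" by simp
  qed
qed

lemma suff_main:
  fixes A :: "nat \<Rightarrow> nat set" and eta mu :: real
  assumes A: "\<And>v. v \<in> {1..nV} \<Longrightarrow> A v \<subseteq> {1..nV}" and vA: "\<And>v. v \<in> {1..nV} \<Longrightarrow> v \<in> A v"
    and serve: "\<And>n v. n \<in> states nV \<Longrightarrow> v \<in> {1..nV} \<Longrightarrow> Wf (A v) n > 0 \<Longrightarrow> 1 \<le> (\<Sum>u\<in>A v. sr n u / r u)"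
    and rho: "\<And>v. v \<in> {1..nV} \<Longrightarrow> (\<Sum>u\<in>A v. lam u / r u) \<le> 1 - eta" and eta: "eta > 0"
    and serve1: "\<And>n. n \<in> states nV \<Longrightarrow> n \<noteq> (\<lambda>_. 0) \<Longrightarrow> \<exists>u\<in>{1..nV}. n u \<ge> 1 \<and> sr n u \<ge> mu"
    and mu: "mu > 0"
  shows "pos_recurrent_chain nV lam r g"
proof -
  let ?z = "(\<lambda>_. 0) :: nat \<Rightarrow> nat"
  define Phi where "Phi = (\<lambda>y. \<Sum>v\<in>{1..nV}. (Wf (A v) y)^2)"
  define B where "B = (\<Sum>v\<in>{1..nV}. \<Sum>u\<in>A v. (lam u + r u) / (r u)^2)"
  define R where "R = (\<Sum>v\<in>{1..nV}. r v)"
  have t0: "(lam u + r u) / (r u)^2 \<ge> 0" if "u \<in> {1..nV}" for u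
    using lam_nn r_pos that by (simp add: less_imp_le)
  have B0: "B \<ge> 0" unfolding B_def
  proof (rule sum_nonneg, rule sum_nonneg)
    fix v u assume "v \<in> {1..nV}" "u \<in> A v"
    then show "(lam u + r u) / (r u)^2 \<ge> 0" using t0 A by blast
  qed
  have Vne: "{1..nV} \<noteq> {}"
  proof
    assume "{1..nV} = {}"
    then have "LL = 0" unfolding LL_def by (simp only: sum.empty)
    then show False using LL_pos by simp
  qed
  have rR: "r v \<le> R" if "v \<in> {1..nV}" for v
    unfolding R_def using that r_pos by (intro member_le_sum) (auto simp: less_imp_le)
  have R0: "R > 0" using Vne rR r_pos by (metis all_not_in_conv less_le_trans)
  have Wnn: "Wf (A v) n \<ge> 0" if "v \<in> {1..nV}" for v n using Wf_nn[OF A[OF that]] .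
  have drift: "q n * (J Phi n - Phi n) \<le> B - 2 * eta * (\<Sum>v\<in>{1..nV}. Wf (A v) n)" if n: "n \<in> states nV" for n
  proof -
    have per: "q n * J (\<lambda>y. (Wf (A v) y)^2) n \<le> q n * (Wf (A v) n)^2 - 2 * eta * Wf (A v) n
        + (\<Sum>u\<in>A v. (lam u + r u) / (r u)^2)" if v: "v \<in> {1..nV}" for v
    proof -
      let ?W = "Wf (A v) n"
      have e: "2 * ?W * ((\<Sum>u\<in>A v. lam u / r u) - (\<Sum>u\<in>A v. sr n u / r u)) \<le> - 2 * eta * ?W"
      proof (cases "?W > 0")
        case True
        have "(\<Sum>u\<in>A v. lam u / r u) - (\<Sum>u\<in>A v. sr n u / r u) \<le> - eta"
          using serve[OF n v True] rho[OF v] by linarith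
        then have "2 * ?W * ((\<Sum>u\<in>A v. lam u / r u) - (\<Sum>u\<in>A v. sr n u / r u)) \<le> 2 * ?W * (- eta)"
          by (rule mult_left_mono) (use True in simp)
        then show ?thesis by (simp only: mult_minus_right mult.commute mult.left_commute)
      next
        case False then have "?W = 0" using Wnn[OF v, of n] by linarith
        then show ?thesis by simp
      qed
      have c: "(\<Sum>u\<in>A v. (lam u + sr n u) / (r u)^2) \<le> (\<Sum>u\<in>A v. (lam u + r u) / (r u)^2)"
        using A[OF v] sr_le[OF n] by (intro sum_mono divide_right_mono) (auto simp: subset_iff)
      show ?thesis using sq_drift[OF A[OF v] n] e c by linarith
    qed
    have "q n * J Phi n = (\<Sum>v\<in>{1..nV}. q n * J (\<lambda>y. (Wf (A v) y)^2) n)"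
      unfolding Phi_def J_sum by (simp add: sum_distrib_left)
    also have "\<dots> \<le> (\<Sum>v\<in>{1..nV}. q n * (Wf (A v) n)^2 - 2 * eta * Wf (A v) n
        + (\<Sum>u\<in>A v. (lam u + r u) / (r u)^2))" by (rule sum_mono) (rule per)
    also have "\<dots> = q n * Phi n - 2 * eta * (\<Sum>v\<in>{1..nV}. Wf (A v) n) + B"
      unfolding Phi_def B_def by (simp add: sum.distrib sum_subtractf sum_distrib_left)
    finally show ?thesis by (simp add: algebra_simps)
  qed
  have Wsz: "(\<Sum>v\<in>{1..nV}. Wf (A v) n) \<ge> real (sz n) / R" for n
  proof -
    have "real (sz n) / R = (\<Sum>v\<in>{1..nV}. real (n v) / R)" by (simp add: sz_def sum_divide_distrib)
    also have "\<dots> \<le> (\<Sum>v\<in>{1..nV}. Wf (A v) n)"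
    proof (rule sum_mono)
      fix v assume v: "v \<in> {1..nV}"
      have fA: "finite (A v)" using A[OF v] finite_subset by blast
      have "real (n v) / R \<le> real (n v) / r v" using rR[OF v] r_pos v R0 by (intro divide_left_mono) auto
      also have "\<dots> \<le> Wf (A v) n" unfolding Wf_def using vA[OF v] A[OF v] r_pos fA
        by (intro member_le_sum[where f="\<lambda>u. real (n u) / r u"]) (auto simp: subset_iff less_imp_le finite_subset)
      finally show "real (n v) / R \<le> Wf (A v) n" .
    qed
    finally show ?thesis .
  qed
  define M where "M = nat \<lceil>(B + 1) * R / (2 * eta)\<rceil>"
  have M: "real M \<ge> (B + 1) * R / (2 * eta)" unfolding M_def by linarith
  define F where "F = {y. sz y \<le> Suc M}"
  define beta where "beta = mu / (QQ + mu)"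
  have bpos: "beta > 0" "beta \<le> 1" using mu QQ_pos by (auto simp: beta_def)
  have HC: "\<forall>y\<in>states nV. y \<noteq> ?z \<longrightarrow> sz y \<le> k \<longrightarrow> (J ^^ k) (\<lambda>_. 1) y \<le> 1 - beta ^ k" for k
    by (rule hit_claim[OF serve1 mu beta_def])
  show ?thesis
  proof (rule foster[where Phi=Phi and F=F and eps="1/QQ" and b="B/LL" and p="beta ^ Suc (Suc M)" and m="Suc (Suc M)"])
    fix y assume y: "y \<in> states nV"
    show "Phi y \<ge> 0" unfolding Phi_def by (simp add: sum_nonneg)
    show "J Phi y \<le> Phi y + B / LL"
    proof -
      have "(\<Sum>v\<in>{1..nV}. Wf (A v) y) \<ge> 0" by (rule sum_nonneg) (rule Wnn)
      then have "2 * eta * (\<Sum>v\<in>{1..nV}. Wf (A v) y) \<ge> 0" using eta by simp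
      then have "q y * (J Phi y - Phi y) \<le> B" using drift[OF y] by linarith
      then have "(q y * (J Phi y - Phi y)) / q y \<le> B / q y" using q_pos[OF y] by (intro divide_right_mono) auto
      then have "J Phi y - Phi y \<le> B / q y" using q_pos[OF y] by simp
      also have "\<dots> \<le> B / LL" using B0 q_ge[OF y] LL_pos by (simp add: divide_left_mono)
      finally show ?thesis by simp
    qed
    show "J Phi y \<le> Phi y - 1 / QQ" if yF: "y \<notin> F"
    proof -
      have "real (sz y) \<ge> real M + 2" using yF by (simp add: F_def)
      then have "real (sz y) > (B + 1) * R / (2 * eta)" using M by linarith
      then have "2 * eta * (real (sz y) / R) > B + 1" using eta R0 by (simp add: field_simps)
      moreover have "2 * eta * (\<Sum>v\<in>{1..nV}. Wf (A v) y) \<ge> 2 * eta * (real (sz y) / R)"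
        using mult_left_mono[OF Wsz[of y], of "2 * eta"] eta by simp
      ultimately have "q y * (J Phi y - Phi y) \<le> -1" using drift[OF y] by linarith
      then have "(q y * (J Phi y - Phi y)) / q y \<le> -1 / q y" using q_pos[OF y] by (intro divide_right_mono) auto
      then have "J Phi y - Phi y \<le> -1 / q y" using q_pos[OF y] by simp
      also have "\<dots> \<le> -1 / QQ" using q_le[OF y] q_pos[OF y] by (simp add: frac_le)
      finally show ?thesis by simp
    qed
    show "(J ^^ Suc (Suc M)) (\<lambda>_. 1) y \<le> 1 - beta ^ Suc (Suc M)" if yF: "y \<in> F"
    proof (cases "y = ?z")
      case False
      then show ?thesis using HC[of "Suc (Suc M)"] y yF by (auto simp: F_def)
    next
      case True
      have "(J ^^ Suc (Suc M)) (\<lambda>_. 1) ?z = J ((J ^^ Suc M) (\<lambda>_. 1)) ?z" by simp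
      also have "\<dots> \<le> 1 - beta ^ Suc M"
      proof (rule J_at0)
        show "0 \<le> 1 - beta ^ Suc M" using bpos power_le_one[of beta "Suc M"] by simp
        fix v assume v: "v \<in> {1..nV}"
        show "(J ^^ Suc M) (\<lambda>_. 1) (up ?z v) \<le> 1 - beta ^ Suc M"
          using HC[of "Suc M"] up0[OF v] up_st[OF zero_st v] by auto
      qed
      also have "\<dots> \<le> 1 - beta ^ Suc (Suc M)" using bpos by (simp add: mult_left_le_one_le)
      finally show ?thesis using True by simp
    qed
  next
    show "1 / QQ > 0" using QQ_pos by simp
    show "B / LL \<ge> 0" using B0 LL_pos by simp
    show "beta ^ Suc (Suc M) > 0" using bpos by simp
  qed
qed

end

lemma rt_E: "rooted_tree nV E \<Longrightarrow> E \<subseteq> {1..nV} \<times> {1..nV}"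
  unfolding rooted_tree_def by (elim conjE)
lemma rt_no1: "rooted_tree nV E \<Longrightarrow> (u, 1) \<notin> E"
  unfolding rooted_tree_def by (elim conjE) blast
lemma rt_par: "rooted_tree nV E \<Longrightarrow> v \<in> {1..nV} \<Longrightarrow> v \<noteq> 1 \<Longrightarrow> \<exists>!u. (u, v) \<in> E"
  unfolding rooted_tree_def by (elim conjE) blast
lemma rt_reach: "rooted_tree nV E \<Longrightarrow> v \<in> {1..nV} \<Longrightarrow> (1, v) \<in> E\<^sup>*"
  unfolding rooted_tree_def by (elim conjE) blast

lemma par_uniq: "rooted_tree nV E \<Longrightarrow> (x, v) \<in> E \<Longrightarrow> (y, v) \<in> E \<Longrightarrow> x = y"
proof -
  assume rt: "rooted_tree nV E" and x: "(x, v) \<in> E" and y: "(y, v) \<in> E"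
  have v: "v \<in> {1..nV}" using subsetD[OF rt_E[OF rt] x] by simp
  have "v \<noteq> 1" using rt_no1[OF rt, of x] x by metis
  then show "x = y" using rt_par[OF rt v] x y by (metis)
qed

lemma trancl_V: "rooted_tree nV E \<Longrightarrow> (u, v) \<in> E\<^sup>+ \<Longrightarrow> u \<in> {1..nV} \<and> v \<in> {1..nV}"
proof -
  assume rt: "rooted_tree nV E" and uv: "(u, v) \<in> E\<^sup>+"
  have E: "E \<subseteq> {1..nV} \<times> {1..nV}" using rt_E[OF rt] .
  obtain x where ux: "(u, x) \<in> E" using tranclD[OF uv] by (elim exE conjE)
  obtain y where yv: "(y, v) \<in> E" using tranclD2[OF uv] by (elim exE conjE)
  show ?thesis using subsetD[OF E ux] subsetD[OF E yv] by simp
qed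

lemma acyc: assumes rt: "rooted_tree nV E" shows "(v, v) \<notin> E\<^sup>+"
proof
  assume vv: "(v, v) \<in> E\<^sup>+"
  have no1: "\<forall>u. (u, 1) \<notin> E" using rt_no1[OF rt] by blast
  have reach: "\<forall>v\<in>{1..nV}. (1, v) \<in> E\<^sup>*" using rt_reach[OF rt] by blast
  have "v \<in> {1..nV}" using trancl_V[OF rt vv] by simp
  then have "(1, v) \<in> E\<^sup>*" using reach by blast
  then show False using vv
  proof (induction rule: rtrancl_induct)
    case base
    then obtain x where "(x, 1) \<in> E" by (metis tranclD2)
    then show False using no1 by blast
  next
    case (step y z)
    obtain x where xz: "(x, z) \<in> E" and zx: "(z, x) \<in> E\<^sup>*"
      using tranclD2[OF step.prems] by (elim exE conjE)
    have "x = y" using par_uniq[OF rt xz step.hyps(2)] .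
    then have "(y, y) \<in> E\<^sup>+" using step.hyps(2) zx by (meson rtrancl_into_trancl2)
    then show False using step.IH by blast
  qed
qed

lemma comp_anc: assumes rt: "rooted_tree nV E" and av: "(a, v) \<in> E\<^sup>+"
  shows "(b, v) \<in> E\<^sup>+ \<Longrightarrow> a = b \<or> (a, b) \<in> E\<^sup>+ \<or> (b, a) \<in> E\<^sup>+"
  using av
proof (induction arbitrary: b rule: trancl_induct)
  case (base y)
  obtain c where cy: "(c, y) \<in> E" and bc: "(b, c) \<in> E\<^sup>*" using tranclD2[OF base.prems] by (elim exE conjE)
  have "c = a" using par_uniq[OF rt cy base.hyps] .
  then show ?case using bc by (metis rtranclD)
next
  case (step y z)
  obtain c where cz: "(c, z) \<in> E" and bc: "(b, c) \<in> E\<^sup>*" using tranclD2[OF step.prems] by (elim exE conjE)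
  have "c = y" using par_uniq[OF rt cz step.hyps(2)] .
  show ?case
  proof (cases "b = y")
    case True then show ?thesis using step.hyps(1) by blast
  next
    case False
    then have "(b, y) \<in> E\<^sup>+" using bc \<open>c = y\<close> by (metis rtranclD)
    then show ?thesis using step.IH by blast
  qed
qed

lemma anc_sub: "rooted_tree nV E \<Longrightarrow> anc E v \<subseteq> {1..nV}"
  using trancl_V unfolding anc_def by blast

lemma anc_bar_sub: "rooted_tree nV E \<Longrightarrow> v \<in> {1..nV} \<Longrightarrow> anc_bar E v \<subseteq> {1..nV}"
  using anc_sub unfolding anc_bar_def by blast

lemma anc_bar_chain: assumes rt: "rooted_tree nV E" and a: "a \<in> anc_bar E v" and b: "b \<in> anc_bar E v"
  and ab: "a \<noteq> b" shows "a \<in> anc E b \<or> b \<in> anc E a"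
  using a b ab comp_anc[OF rt, of a v b] unfolding anc_bar_def anc_def by auto

lemma anc_trans: "a \<in> anc E w \<Longrightarrow> w \<in> anc_bar E v \<Longrightarrow> a \<in> anc E v"
  unfolding anc_bar_def anc_def by auto

lemma top_exists:
  assumes rt: "rooted_tree nV E" and v: "v \<in> {1..nV}" and u: "u \<in> anc_bar E v" and nu: "n u \<ge> (1::nat)"
  shows "\<exists>w\<in>anc_bar E v. n w \<ge> 1 \<and> (\<forall>a\<in>anc E w. n a = 0)"
proof -
  let ?P = "\<lambda>w. w \<in> anc_bar E v \<and> n w \<ge> 1"
  obtain w where Pw: "?P w" and mn: "\<forall>y. ?P y \<longrightarrow> card (anc E w) \<le> card (anc E y)"
    using ex_has_least_nat[of ?P u "\<lambda>w. card (anc E w)"] u nu by blast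
  have "\<forall>a\<in>anc E w. n a = 0"
  proof (rule ccontr)
    assume "\<not> (\<forall>a\<in>anc E w. n a = 0)"
    then obtain a where a: "a \<in> anc E w" and na: "n a \<ge> 1" by auto
    have Pa: "?P a" using anc_trans[OF a] Pw na unfolding anc_bar_def by blast
    have sub: "anc E a \<subseteq> anc E w" using a unfolding anc_def by auto
    have "a \<notin> anc E a" using acyc[OF rt] unfolding anc_def by blast
    then have "anc E a \<subset> anc E w" using sub a by blast
    moreover have "finite (anc E w)" using anc_sub[OF rt] finite_subset by blast
    ultimately have "card (anc E a) < card (anc E w)" by (rule psubset_card_mono[rotated])
    then show False using mn Pa by fastforce
  qed
  then show ?thesis using Pw by blast
qed

lemma Zset_sum_le: assumes rt: "rooted_tree nV E" and v: "v \<in> {1..nV}" and z: "z \<in> Zset nV E"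
  shows "(\<Sum>u\<in>anc_bar E v. z u) \<le> 1"
proof -
  let ?P = "anc_bar E v"
  have fP: "finite ?P" using anc_bar_sub[OF rt v] finite_subset by blast
  have z01: "\<And>u. z u = 0 \<or> z u = 1" using z by (auto simp: Zset_def)
  have "(\<Sum>u\<in>?P. z u) = (\<Sum>u\<in>?P. if z u = 1 then 1 else 0)"
    by (rule sum.cong) (use z01 in auto)
  also have "\<dots> = real (card {u\<in>?P. z u = 1})"
    using fP by (simp add: sum.If_cases Int_def conj_commute)
  also have "\<dots> \<le> 1"
  proof -
    have "card {u\<in>?P. z u = 1} \<le> Suc 0"
    proof (subst card_le_Suc0_iff_eq)
      show "finite {u\<in>?P. z u = 1}" using fP by simp
      show "\<forall>x\<in>{u\<in>?P. z u = 1}. \<forall>y\<in>{u\<in>?P. z u = 1}. x = y"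
      proof (intro ballI, rule ccontr)
        fix x y assume x: "x \<in> {u\<in>?P. z u = 1}" and y: "y \<in> {u\<in>?P. z u = 1}" and xy: "x \<noteq> y"
        have xV: "x \<in> {1..nV}" "y \<in> {1..nV}" using x y anc_bar_sub[OF rt v] by auto
        have prod: "\<forall>v\<in>{1..nV}. \<forall>v'\<in>anc E v. z v * z v' = 0" using z by (simp add: Zset_def)
        from anc_bar_chain[OF rt _ _ xy] x y
        have "x \<in> anc E y \<or> y \<in> anc E x" by blast
        then show False using prod xV x y by fastforce
      qed
    qed
    then show ?thesis by simp
  qed
  finally show ?thesis .
qed

lemma convZ_props: assumes rt: "rooted_tree nV E" and gc: "gm \<in> convZ nV E"
  shows "\<forall>v\<in>{1..nV}. 0 \<le> gm v \<and> gm v \<le> 1"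
    and "\<forall>v\<in>{1..nV}. (\<Sum>u\<in>anc_bar E v. gm u) \<le> 1"
proof -
  obtain c where c0: "\<forall>z\<in>Zset nV E. c z \<ge> 0" and c1: "(\<Sum>z\<in>Zset nV E. c z) = 1"
    and gv: "\<forall>v\<in>{1..nV}. gm v = (\<Sum>z\<in>Zset nV E. c z * z v)" using gc by (auto simp: convZ_def)
  have z01: "0 \<le> z v \<and> z v \<le> 1" if "z \<in> Zset nV E" for z v
  proof -
    have "z v \<in> {0, 1}" using that unfolding Zset_def by blast
    then show ?thesis by auto
  qed
  show "\<forall>v\<in>{1..nV}. 0 \<le> gm v \<and> gm v \<le> 1"
  proof
    fix v assume v: "v \<in> {1..nV}"
    have "0 \<le> (\<Sum>z\<in>Zset nV E. c z * z v)" using c0 z01 by (intro sum_nonneg) auto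
    moreover have "(\<Sum>z\<in>Zset nV E. c z * z v) \<le> (\<Sum>z\<in>Zset nV E. c z)"
      using c0 z01 by (intro sum_mono) (simp add: mult_left_le)
    ultimately show "0 \<le> gm v \<and> gm v \<le> 1" using gv v c1 by simp
  qed
  show "\<forall>v\<in>{1..nV}. (\<Sum>u\<in>anc_bar E v. gm u) \<le> 1"
  proof
    fix v assume v: "v \<in> {1..nV}"
    have "(\<Sum>u\<in>anc_bar E v. gm u) = (\<Sum>u\<in>anc_bar E v. \<Sum>z\<in>Zset nV E. c z * z u)"
      using anc_bar_sub[OF rt v] gv by (intro sum.cong) auto
    also have "\<dots> = (\<Sum>z\<in>Zset nV E. c z * (\<Sum>u\<in>anc_bar E v. z u))"
      by (simp add: sum.swap[of _ "anc_bar E v"] sum_distrib_left)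
    also have "\<dots> \<le> (\<Sum>z\<in>Zset nV E. c z)"
      using c0 Zset_sum_le[OF rt v] by (intro sum_mono) (simp add: mult_left_le)
    finally show "(\<Sum>u\<in>anc_bar E v. gm u) \<le> 1" using c1 by simp
  qed
qed

lemma Zset_finite: "finite (Zset nV E)"
proof (rule finite_subset)
  show "Zset nV E \<subseteq> (\<lambda>A v. if v \<in> A then 1 else 0) ` Pow {1..nV}"
  proof
    fix z assume z: "z \<in> Zset nV E"
    have z01: "\<forall>v. z v \<in> {0, 1}" and zo: "\<forall>v. v \<notin> {1..nV} \<longrightarrow> z v = 0"
      using z unfolding Zset_def by blast+
    have "z = (\<lambda>v. if v \<in> {v\<in>{1..nV}. z v = 1} then 1 else 0)"
    proof
      fix v show "z v = (if v \<in> {v\<in>{1..nV}. z v = 1} then 1 else 0)"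
        using z01 zo by (cases "v \<in> {1..nV}") auto
    qed
    then show "z \<in> (\<lambda>A v. if v \<in> A then 1 else 0) ` Pow {1..nV}" by blast
  qed
qed simp

lemma z_convZ: "z \<in> Zset nV E \<Longrightarrow> z \<in> convZ nV E"
  unfolding convZ_def
proof (intro CollectI exI[of _ "\<lambda>w. if w = z then 1 else 0"] conjI)
  assume z: "z \<in> Zset nV E"
  show "\<forall>w\<in>Zset nV E. (if w = z then 1 else 0) \<ge> (0::real)" by simp
  show "(\<Sum>w\<in>Zset nV E. if w = z then 1 else 0) = (1::real)"
    using z Zset_finite by (simp add: sum.delta')
  show "\<forall>v\<in>{1..nV}. z v = (\<Sum>w\<in>Zset nV E. (if w = z then 1 else 0) * w v)"
  proof
    fix v
    have "(\<Sum>w\<in>Zset nV E. (if w = z then 1 else 0) * w v) = (\<Sum>w\<in>Zset nV E. if w = z then w v else 0)"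
      by (rule sum.cong) auto
    also have "\<dots> = z v" using z Zset_finite[of nV E] by (simp add: sum.delta')
    finally show "z v = (\<Sum>w\<in>Zset nV E. (if w = z then 1 else 0) * w v)" by simp
  qed
qed

definition topg :: "(nat \<times> nat) set \<Rightarrow> nat \<Rightarrow> (nat \<Rightarrow> nat) \<Rightarrow> nat \<Rightarrow> real" where
  "topg E nV n v = (if v \<in> {1..nV} \<and> 1 \<le> n v \<and> (\<forall>a\<in>anc E v. n a = 0) then 1 else 0)"

lemma topg_Z: "topg E nV n \<in> Zset nV E"
  unfolding Zset_def
proof (intro CollectI conjI allI ballI impI)
  fix v show "topg E nV n v \<in> {0, 1}" by (simp add: topg_def)
  fix v assume "v \<notin> {1..nV}"
  then have "\<not> (v \<in> {1..nV} \<and> 1 \<le> n v \<and> (\<forall>a\<in>anc E v. n a = 0))" by blast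
  then show "topg E nV n v = 0" unfolding topg_def by (rule if_not_P)
next
  fix v v' assume v: "v \<in> {1..nV}" and v': "v' \<in> anc E v"
  show "topg E nV n v * topg E nV n v' = 0"
  proof (cases "topg E nV n v = 0")
    case False
    then have "\<forall>a\<in>anc E v. n a = 0" by (simp add: topg_def split: if_splits)
    then have "n v' = 0" using v' by blast
    then show ?thesis by (simp add: topg_def)
  qed simp
qed

lemma topg_ra: "rate_alloc nV E (topg E nV)"
  unfolding rate_alloc_def using topg_Z z_convZ by blast

theorem proposition2:
  fixes nV :: nat and E :: "(nat \<times> nat) set" and lam r :: "nat \<Rightarrow> real"
  assumes "rooted_tree nV E"
    and "\<forall>v\<in>{1..nV}. lam v \<ge> 0"
    and "\<forall>v\<in>{1..nV}. r v > 0"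
  shows "(\<exists>\<gamma>. rate_alloc nV E \<gamma> \<and> pos_recurrent_chain nV lam r \<gamma>)
     \<longleftrightarrow> (\<forall>v\<in>{1..nV}. (\<Sum>v'\<in>anc_bar E v. lam v' / r v') < 1)"
proof -
  note rt = assms(1) and lnn = assms(2) and rp = assms(3)
  let ?z = "(\<lambda>_. 0) :: nat \<Rightarrow> nat"
  show ?thesis
  proof (cases "(\<Sum>v\<in>{1..nV}. lam v) = 0")
    case True
    have l0: "lam v = 0" if "v \<in> {1..nV}" for v
      using True lnn that sum_nonneg_eq_0_iff[of "{1..nV}" lam] by simp
    have rhs: "\<forall>v\<in>{1..nV}. (\<Sum>v'\<in>anc_bar E v. lam v' / r v') < 1"
    proof
      fix v assume v: "v \<in> {1..nV}"
      have "(\<Sum>v'\<in>anc_bar E v. lam v' / r v') = 0"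
        using anc_bar_sub[OF rt v] l0 by (intro sum.neutral) auto
      then show "(\<Sum>v'\<in>anc_bar E v. lam v' / r v') < 1" by simp
    qed
    have "rate_alloc nV E (topg E nV)" by (rule topg_ra)
    moreover have "pos_recurrent_chain nV lam r (topg E nV)"
    proof -
      have "qtot nV lam r (topg E nV) ?z = 0"
        unfolding qtot_def srate_def using True by simp
      then show ?thesis unfolding pos_recurrent_chain_def pos_recurrent_state_def recurrent_state_def by simp
    qed
    ultimately show ?thesis using rhs by blast
  next
    case False
    then have Lpos: "(\<Sum>v\<in>{1..nV}. lam v) > 0" using lnn sum_nonneg[of "{1..nV}" lam] by force
    show ?thesis
    proof
      assume "\<exists>\<gamma>. rate_alloc nV E \<gamma> \<and> pos_recurrent_chain nV lam r \<gamma>"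
      then obtain gm where ra: "rate_alloc nV E gm" and pr: "pos_recurrent_chain nV lam r gm" by blast
      have cz: "gm n \<in> convZ nV E" if "n \<in> states nV" for n using ra that by (simp add: rate_alloc_def)
      interpret qsys nV lam r gm
      proof
        show "\<forall>v\<in>{1..nV}. lam v \<ge> 0" by (rule lnn)
        show "\<forall>v\<in>{1..nV}. r v > 0" by (rule rp)
        show "\<forall>n\<in>states nV. \<forall>v\<in>{1..nV}. gm n v \<ge> 0" using convZ_props(1)[OF rt cz] by blast
        show "\<forall>n\<in>states nV. \<forall>v\<in>{1..nV}. gm n v \<le> 1" using convZ_props(1)[OF rt cz] by blast
        show "(\<Sum>v\<in>{1..nV}. lam v) > 0" by (rule Lpos)
      qed
      have q0: "q ?z > 0" by (rule q_pos[OF zero_st])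
      have sh: "summable (\<lambda>k. hold_term nV lam r gm ?z k ?z)"
        using pr q0 unfolding pos_recurrent_chain_def pos_recurrent_state_def by auto
      show "\<forall>v\<in>{1..nV}. (\<Sum>v'\<in>anc_bar E v. lam v' / r v') < 1"
      proof (rule ccontr)
        assume "\<not> (\<forall>v\<in>{1..nV}. (\<Sum>v'\<in>anc_bar E v. lam v' / r v') < 1)"
        then obtain v where v: "v \<in> {1..nV}" and ge: "(\<Sum>v'\<in>anc_bar E v. lam v' / r v') \<ge> 1"
          by (auto simp: not_less)
        show False
        proof (rule nec_core[OF anc_bar_sub[OF rt v] _ ge sh])
          fix n assume "n \<in> states nV"
          then show "(\<Sum>u\<in>anc_bar E v. gm n u) \<le> 1" using convZ_props(2)[OF rt cz] v by blast
        qed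
      qed
    next
      assume rhs: "\<forall>v\<in>{1..nV}. (\<Sum>v'\<in>anc_bar E v. lam v' / r v') < 1"
      let ?g = "topg E nV"
      interpret qsys nV lam r ?g
      proof
        show "\<forall>v\<in>{1..nV}. lam v \<ge> 0" by (rule lnn)
        show "\<forall>v\<in>{1..nV}. r v > 0" by (rule rp)
        show "\<forall>n\<in>states nV. \<forall>v\<in>{1..nV}. ?g n v \<ge> 0" by (simp add: topg_def)
        show "\<forall>n\<in>states nV. \<forall>v\<in>{1..nV}. ?g n v \<le> 1" by (simp add: topg_def)
        show "(\<Sum>v\<in>{1..nV}. lam v) > 0" by (rule Lpos)
      qed
      have Vne: "{1..nV} \<noteq> {}"
      proof
        assume "{1..nV} = {}"
        then have "(\<Sum>v\<in>{1..nV}. lam v) = 0" by (simp only: sum.empty)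
        then show False using Lpos by simp
      qed
      define eta where "eta = Min ((\<lambda>v. 1 - (\<Sum>v'\<in>anc_bar E v. lam v' / r v')) ` {1..nV})"
      have eta: "eta > 0" unfolding eta_def using Vne rhs by (subst Min_gr_iff) auto
      have rho: "(\<Sum>u\<in>anc_bar E v. lam u / r u) \<le> 1 - eta" if v: "v \<in> {1..nV}" for v
      proof -
        have "eta \<le> 1 - (\<Sum>v'\<in>anc_bar E v. lam v' / r v')" unfolding eta_def using v by (intro Min_le) auto
        then show ?thesis by simp
      qed
      define mu where "mu = 1 / (\<Sum>v\<in>{1..nV}. 1 / r v)"
      have sp: "(\<Sum>v\<in>{1..nV}. 1 / r v) > 0"
      proof -
        obtain v where v: "v \<in> {1..nV}" using Vne by blast
        have "1 / r v \<le> (\<Sum>v\<in>{1..nV}. 1 / r v)" using v rp by (intro member_le_sum) (auto simp: less_imp_le)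
        moreover have "1 / r v > 0" using v rp by simp
        ultimately show ?thesis by linarith
      qed
      have mu: "mu > 0" unfolding mu_def using sp by simp
      have rmu: "r v \<ge> mu" if v: "v \<in> {1..nV}" for v
      proof -
        have "1 / r v \<le> (\<Sum>v\<in>{1..nV}. 1 / r v)" using v rp by (intro member_le_sum) (auto simp: less_imp_le)
        then show ?thesis unfolding mu_def using rp v sp by (simp add: divide_le_eq field_simps)
      qed
      have srtop: "sr n w = r w" if "w \<in> {1..nV}" "n w \<ge> 1" "\<forall>a\<in>anc E w. n a = 0" for n w
        using that by (simp add: srate_def topg_def)
      show "\<exists>\<gamma>. rate_alloc nV E \<gamma> \<and> pos_recurrent_chain nV lam r \<gamma>"
      proof (intro exI conjI)
        show "rate_alloc nV E ?g" by (rule topg_ra)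
        show "pos_recurrent_chain nV lam r ?g"
        proof (rule suff_main[where A="anc_bar E" and eta=eta and mu=mu])
          show "\<And>v. v \<in> {1..nV} \<Longrightarrow> anc_bar E v \<subseteq> {1..nV}" using anc_bar_sub[OF rt] .
          show "\<And>v. v \<in> {1..nV} \<Longrightarrow> v \<in> anc_bar E v" by (simp add: anc_bar_def)
          show "\<And>v. v \<in> {1..nV} \<Longrightarrow> (\<Sum>u\<in>anc_bar E v. lam u / r u) \<le> 1 - eta" by (rule rho)
          show "eta > 0" by (rule eta)
          show "mu > 0" by (rule mu)
        next
          fix n v assume n: "n \<in> states nV" and v: "v \<in> {1..nV}" and W: "Wf (anc_bar E v) n > 0"
          have fA: "finite (anc_bar E v)" using anc_bar_sub[OF rt v] finite_subset by blast
          obtain u where u: "u \<in> anc_bar E v" and nu: "n u \<ge> 1"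
          proof (rule ccontr)
            assume "\<not> thesis"
            then have "\<forall>u\<in>anc_bar E v. n u = 0" using that by fastforce
            then have "Wf (anc_bar E v) n = 0" unfolding Wf_def by simp
            then show False using W by simp
          qed
          obtain w where w: "w \<in> anc_bar E v" and nw: "n w \<ge> 1" and tw: "\<forall>a\<in>anc E w. n a = 0"
            using top_exists[of nV E v u n, OF rt v u nu] by blast
          have wV: "w \<in> {1..nV}" using w anc_bar_sub[OF rt v] by blast
          have rw: "r w > 0" using rp wV by blast
          have "1 = sr n w / r w" using srtop[OF wV nw tw] rw by simp
          also have "\<dots> \<le> (\<Sum>u\<in>anc_bar E v. sr n u / r u)"
            using fA w anc_bar_sub[OF rt v] sr_nn[OF n] rp
            by (intro member_le_sum[where f="\<lambda>u. sr n u / r u"]) (auto simp: subset_iff less_imp_le)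
          finally show "1 \<le> (\<Sum>u\<in>anc_bar E v. sr n u / r u)" .
        next
          fix n assume n: "n \<in> states nV" and nz: "n \<noteq> ?z"
          obtain u where nu0: "n u \<noteq> 0" using nz by auto
          have uV: "u \<in> {1..nV}" using n nu0 by (auto simp: states_def)
          obtain w where w: "w \<in> anc_bar E u" and nw: "n w \<ge> 1" and tw: "\<forall>a\<in>anc E w. n a = 0"
          proof -
            have uu: "u \<in> anc_bar E u" by (simp add: anc_bar_def)
            have nu1: "1 \<le> n u" using nu0 by simp
            show ?thesis using top_exists[of nV E u u n, OF rt uV uu nu1] that by blast
          qed
          have wV: "w \<in> {1..nV}" using w anc_bar_sub[OF rt uV] by blast
          show "\<exists>u\<in>{1..nV}. n u \<ge> 1 \<and> sr n u \<ge> mu"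
          proof (rule bexI[of _ w])
            show "n w \<ge> 1 \<and> sr n w \<ge> mu" using nw srtop[OF wV nw tw] rmu[OF wV] by simp
          qed (rule wV)
        qed
      qed
    qed
  qed
qed

end
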